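(* Let $d\le\ell$ be positive integers and $L\ge2$. For any $(p,n,d)$-non-backtracking multi-labelling of an $L$-graph in which every $p$-vertex carries $d$ $p$-labels, with $\tilde r$ distinct $n$-labels and $\tilde c$ distinct $p$-labels, $$\tilde r+\frac{\tilde c}{\ell}\le\frac L2+\frac{dL}{2\ell}.$$
   Context: An $L$-graph is a cycle with $2L$ vertices alternating between $n$-vertices and $p$-vertices. A $(p,n,d)$-non-backtracking multi-labelling assigns an $n$-label in $[n]$ to each $n$-vertex and a tuple of $d$ $p$-labels in $[p]$ to each $p$-vertex, with $d\le\ell$, such that: (i) the $n$-label of each $n$-vertex differs from those of the $n$-vertices immediately preceding and following it, and the tuple of each $p$-vertex differs (as a set, i.e. up to reordering) from those of the $p$-vertices immediately preceding and following it; (ii) for each $n$-label $i$ and $p$-label $j$ there is an even number of edges whose $n$-endpoint is labelled $i$ and whose $p$-endpoint's tuple contains $j$. *)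

theory Defs
  imports Complex_Main
begin

text \<open>An L-graph: a cycle n_0 - p_0 - n_1 - p_1 - ... - n_{L-1} - p_{L-1} - n_0 with 2L vertices.
  n-vertex k is labelled a k, p-vertex k carries the tuple b k (a list of length d).
  Edges: (n_k, p_k) and (n_{(k+1) mod L}, p_k) for k < L.\<close>

definition edge_count :: "nat \<Rightarrow> (nat \<Rightarrow> nat) \<Rightarrow> (nat \<Rightarrow> nat list) \<Rightarrow> nat \<Rightarrow> nat \<Rightarrow> nat" where
  "edge_count L a b i j =
     card {k. k < L \<and> a k = i \<and> j \<in> set (b k)}
   + card {k. k < L \<and> a ((k + 1) mod L) = i \<and> j \<in> set (b k)}"

definition nb_multilabelling ::
  "nat \<Rightarrow> nat \<Rightarrow> nat \<Rightarrow> nat \<Rightarrow> nat \<Rightarrow> (nat \<Rightarrow> nat) \<Rightarrow> (nat \<Rightarrow> nat list) \<Rightarrow> bool" where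
  "nb_multilabelling p n d l L a b \<longleftrightarrow>
     d \<le> l \<and>
     (\<forall>k<L. a k \<in> {1..n}) \<and>
     (\<forall>k<L. length (b k) = d \<and> set (b k) \<subseteq> {1..p}) \<and>
     (\<forall>k<L. a k \<noteq> a ((k + 1) mod L)) \<and>
     (\<forall>k<L. set (b k) \<noteq> set (b ((k + 1) mod L))) \<and>
     (\<forall>i\<in>{1..n}. \<forall>j\<in>{1..p}. even (edge_count L a b i j))"

end

theory Submission
  imports Defs
begin

lemma fiber_count:
  fixes A :: "nat set" and P :: "nat \<Rightarrow> 'b \<Rightarrow> bool" and C :: "'b set"
  assumes "finite A" "finite C"
    and two: "\<And>y. y \<in> C \<Longrightarrow> \<exists>x1\<in>A. \<exists>x2\<in>A. x1 \<noteq> x2 \<and> P x1 y \<and> P x2 y"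
  shows "2 * card C \<le> (\<Sum>x\<in>A. card {y\<in>C. P x y})"
proof -
  have "(\<Sum>x\<in>A. card {y\<in>C. P x y}) = (\<Sum>x\<in>A. \<Sum>y\<in>C. if P x y then 1 else 0)"
    using assms(2) by (simp add: sum.If_cases Int_def)
  also have "\<dots> = (\<Sum>y\<in>C. \<Sum>x\<in>A. if P x y then 1 else 0)"
    by (rule sum.swap)
  also have "\<dots> = (\<Sum>y\<in>C. card {x\<in>A. P x y})"
    using assms(1) by (simp add: sum.If_cases Int_def)
  also have "\<dots> \<ge> (\<Sum>y\<in>C. 2)"
  proof (rule sum_mono)
    fix y assume "y \<in> C"
    then obtain x1 x2 where "x1\<in>A" "x2\<in>A" "x1 \<noteq> x2" "P x1 y" "P x2 y" using two by blast
    then have "{x1, x2} \<subseteq> {x\<in>A. P x y}" by auto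
    moreover have "finite {x\<in>A. P x y}" using assms(1) by simp
    ultimately have "card {x1,x2} \<le> card {x\<in>A. P x y}" by (rule card_mono[rotated])
    then show "2 \<le> card {x\<in>A. P x y}" using \<open>x1 \<noteq> x2\<close> by simp
  qed
  finally show ?thesis by simp
qed

theorem lemma5p4:
  fixes p n d l L :: nat and a :: "nat \<Rightarrow> nat" and b :: "nat \<Rightarrow> nat list"
  assumes "0 < d" and "d \<le> l" and "2 \<le> L"
    and "nb_multilabelling p n d l L a b"
    and "\<forall>k<L. card (set (b k)) = d"
  shows "real (card (a ` {..<L})) + real (card (\<Union>k<L. set (b k))) / real l
           \<le> real L / 2 + real d * real L / (2 * real l)"
proof -
  note nb = assms(4)[unfolded nb_multilabelling_def]
  have arng: "\<And>k. k < L \<Longrightarrow> a k \<in> {1..n}" using nb by blast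
  have brng: "\<And>k. k < L \<Longrightarrow> set (b k) \<subseteq> {1..p}" using nb by blast
  have adiff: "\<And>k. k < L \<Longrightarrow> a k \<noteq> a ((k + 1) mod L)" using nb by blast
  have bdiff: "\<And>k. k < L \<Longrightarrow> set (b k) \<noteq> set (b ((k + 1) mod L))" using nb by blast
  have ev: "\<And>i j. i \<in> {1..n} \<Longrightarrow> j \<in> {1..p} \<Longrightarrow> even (edge_count L a b i j)" using nb by blast
  define pr where "pr k = (if k = 0 then L - 1 else k - 1)" for k
  have pr1: "\<And>k. k < L \<Longrightarrow> pr k < L \<and> (pr k + 1) mod L = k" using assms(3) by (auto simp: pr_def)
  have pr2: "\<And>k k'. k < L \<Longrightarrow> k' < L \<Longrightarrow> (k' + 1) mod L = k \<Longrightarrow> k' = pr k"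
  proof -
    fix k k' assume h: "k < L" "k' < L" "(k' + 1) mod L = k"
    show "k' = pr k"
    proof (cases "k' + 1 < L")
      case True then show ?thesis using h by (auto simp: pr_def)
    next
      case False then have "k' + 1 = L" using h by simp
      then show ?thesis using h by (auto simp: pr_def)
    qed
  qed
  have pr3: "\<And>k. k < L \<Longrightarrow> pr k \<noteq> k" using assms(3) by (auto simp: pr_def)
  have A: "\<exists>k'<L. k' \<noteq> k \<and> a k' = a k" if k: "k < L" for k
  proof (rule ccontr)
    assume "\<not> ?thesis"
    then have uniq: "\<And>k'. k' < L \<Longrightarrow> a k' = a k \<Longrightarrow> k' = k" by blast
    define i where "i = a k"
    have S1: "\<And>j. {k'. k' < L \<and> a k' = i \<and> j \<in> set (b k')} = (if j \<in> set (b k) then {k} else {})"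
      using k by (auto simp: i_def dest: uniq)
    have S2: "\<And>j. {k'. k' < L \<and> a ((k' + 1) mod L) = i \<and> j \<in> set (b k')}
         = (if j \<in> set (b (pr k)) then {pr k} else {})"
    proof -
      fix j
      have "\<And>k'. k' < L \<Longrightarrow> a ((k' + 1) mod L) = i \<longleftrightarrow> k' = pr k"
      proof -
        fix k' assume "k' < L"
        have "(k'+1) mod L < L" using k by simp
        then show "a ((k' + 1) mod L) = i \<longleftrightarrow> k' = pr k"
          using pr1[OF k] pr2[OF k \<open>k' < L\<close>] uniq[of "(k'+1) mod L"] unfolding i_def by auto
      qed
      then show "{k'. k' < L \<and> a ((k' + 1) mod L) = i \<and> j \<in> set (b k')}
         = (if j \<in> set (b (pr k)) then {pr k} else {})" using pr1[OF k] by auto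
    qed
    have ec: "\<And>j. edge_count L a b i j = (if j \<in> set (b k) then 1 else 0) + (if j \<in> set (b (pr k)) then 1 else 0)"
      unfolding edge_count_def S1 S2 by simp
    have "set (b k) = set (b (pr k))"
    proof (intro equalityI subsetI)
      fix j assume j: "j \<in> set (b k)"
      then have "j \<in> {1..p}" using brng k by blast
      with ev[of i j] arng[OF k] ec[of j] j show "j \<in> set (b (pr k))" unfolding i_def by (auto split: if_splits)
    next
      fix j assume j: "j \<in> set (b (pr k))"
      then have "j \<in> {1..p}" using brng pr1 k by blast
      with ev[of i j] arng[OF k] ec[of j] j show "j \<in> set (b k)" unfolding i_def by (auto split: if_splits)
    qed
    then show False using bdiff[of "pr k"] pr1[OF k] by simp
  qed
  have B: "\<exists>k'<L. k' \<noteq> k \<and> j \<in> set (b k')" if k: "k < L" and j: "j \<in> set (b k)" for k j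
  proof (rule ccontr)
    assume "\<not> ?thesis"
    then have uniq: "\<And>k'. k' < L \<Longrightarrow> j \<in> set (b k') \<Longrightarrow> k' = k" by blast
    define i where "i = a k"
    have S1: "{k'. k' < L \<and> a k' = i \<and> j \<in> set (b k')} = {k}"
      using k j by (auto simp: i_def dest: uniq)
    have S2: "{k'. k' < L \<and> a ((k' + 1) mod L) = i \<and> j \<in> set (b k')} = {}"
      using adiff[OF k] by (auto simp: i_def dest: uniq)
    have "edge_count L a b i j = 1" unfolding edge_count_def S1 S2 by simp
    moreover have "j \<in> {1..p}" using brng k j by blast
    ultimately show False using ev[of i j] arng[OF k] by (simp add: i_def)
  qed
  define R where "R = a ` {..<L}"
  define C where "C = (\<Union>k<L. set (b k))"
  have fC: "finite C" unfolding C_def by simp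
  have fR: "finite R" unfolding R_def by simp
  have r1: "2 * card R \<le> (\<Sum>x\<in>{..<L}. card {y\<in>R. a x = y})"
  proof (rule fiber_count)
    fix y assume "y \<in> R"
    then obtain k where k: "k < L" "y = a k" by (auto simp: R_def)
    then obtain k' where "k' < L" "k' \<noteq> k" "a k' = a k" using A by blast
    then show "\<exists>x1\<in>{..<L}. \<exists>x2\<in>{..<L}. x1 \<noteq> x2 \<and> a x1 = y \<and> a x2 = y" using k by auto
  qed (use fR in auto)
  have "\<And>x. x \<in> {..<L} \<Longrightarrow> {y\<in>R. a x = y} = {a x}" by (auto simp: R_def)
  then have "(\<Sum>x\<in>{..<L}. card {y\<in>R. a x = y}) = L" by simp
  with r1 have rR: "2 * card R \<le> L" by simp
  have c1: "2 * card C \<le> (\<Sum>x\<in>{..<L}. card {y\<in>C. y \<in> set (b x)})"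
  proof (rule fiber_count)
    fix y assume "y \<in> C"
    then obtain k where k: "k < L" "y \<in> set (b k)" by (auto simp: C_def)
    then obtain k' where "k' < L" "k' \<noteq> k" "y \<in> set (b k')" using B by blast
    then show "\<exists>x1\<in>{..<L}. \<exists>x2\<in>{..<L}. x1 \<noteq> x2 \<and> y \<in> set (b x1) \<and> y \<in> set (b x2)" using k by auto
  qed (use fC in auto)
  have "\<And>x. x \<in> {..<L} \<Longrightarrow> {y\<in>C. y \<in> set (b x)} = set (b x)" by (auto simp: C_def)
  then have "(\<Sum>x\<in>{..<L}. card {y\<in>C. y \<in> set (b x)}) = (\<Sum>x\<in>{..<L}. d)"
    using assms(5) by simp
  with c1 have cC: "2 * card C \<le> d * L" by (simp add: mult.commute)
  have lpos: "real l > 0" using assms(1,2) by simp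
  have h1: "real (card R) \<le> real L / 2" using rR by simp
  have "2 * real (card C) \<le> real d * real L" using cC by (metis of_nat_le_iff of_nat_mult of_nat_numeral)
  then have h2: "real (card C) / real l \<le> real d * real L / (2 * real l)"
    using lpos by (simp add: field_simps)
  show ?thesis using h1 h2 unfolding R_def C_def by simp
qed

end
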